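(* Let $\omega$ be a Schwarz-type function with $\|\omega\|_\infty<1$ and let $F=\ell\circ\omega$. If $\varphi$ is a Schwarz-type function with $\|\varphi\|_\infty<\frac{1-\|\omega\|_\infty}{1+\|\omega\|_\infty}$, then $T_{F,\varphi}(f)\in\mathcal{P}$ for every $f\in\mathcal{P}$.
   Context: $\mathbb{D}$ is the open unit disk. $\mathcal{P}$ is the set of analytic $f$ on $\mathbb{D}$ with $\mathrm{Re}\,f>0$ and $f(0)=1$. A Schwarz-type function is an analytic $\varphi:\mathbb{D}\to\mathbb{D}$ with $\varphi(0)=0$. $\ell(z)=\frac{1+z}{1-z}$. $\|\varphi\|_\infty=\sup_{z\in\mathbb{D}}|\varphi(z)|$. $T_{F,\varphi}(f)=F\cdot(f\circ\varphi)$. *)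

theory Defs
  imports "HOL-Complex_Analysis.Complex_Analysis"
begin

definition unit_disk :: "complex set" where
  "unit_disk = ball 0 1"

definition carath_P :: "(complex \<Rightarrow> complex) set" where
  "carath_P = {f. f holomorphic_on unit_disk \<and> (\<forall>z\<in>unit_disk. Re (f z) > 0) \<and> f 0 = 1}"

definition schwarz_type :: "(complex \<Rightarrow> complex) \<Rightarrow> bool" where
  "schwarz_type \<phi> \<longleftrightarrow> \<phi> holomorphic_on unit_disk \<and> \<phi> ` unit_disk \<subseteq> unit_disk \<and> \<phi> 0 = 0"

definition ell :: "complex \<Rightarrow> complex" where
  "ell z = (1 + z) / (1 - z)"

definition sup_norm :: "(complex \<Rightarrow> complex) \<Rightarrow> real" where
  "sup_norm \<phi> = (SUP z\<in>unit_disk. cmod (\<phi> z))"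

definition weighted_comp :: "(complex \<Rightarrow> complex) \<Rightarrow> (complex \<Rightarrow> complex) \<Rightarrow> (complex \<Rightarrow> complex) \<Rightarrow> (complex \<Rightarrow> complex)" where
  "weighted_comp F \<phi> f = (\<lambda>z. F z * f (\<phi> z))"

end

theory Submission imports Defs begin


lemma key_ineq:
  fixes a r :: real
  assumes "0 \<le> a" "a < 1" "0 \<le> r" "r < (1 - a) / (1 + a)"
  shows "4*a*r < (1-a^2)*(1-r^2)"
proof -
  define r0 where "r0 = (1 - a) / (1 + a)"
  have e: "(1-a^2)*(1-r0^2) = 4*a*r0"
  proof -
    have p: "1 + a \<noteq> 0" using assms by simp
    have "1 - r0^2 = 4*a/(1+a)^2" unfolding r0_def using p
      by (simp add: divide_simps power2_eq_square) (simp add: algebra_simps)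
    then show ?thesis unfolding r0_def using p
      by (simp add: divide_simps power2_eq_square) (simp add: algebra_simps)
  qed
  have "(1-a^2)*(1-r^2) - 4*a*r = (1-a^2)*(r0^2 - r^2) + 4*a*(r0 - r)"
    using e by (simp add: algebra_simps power2_eq_square)
  moreover have "r < r0" using assms r0_def by simp
  moreover have "0 < 1 - a^2" using assms using power_strict_mono[of a 1 2] by simp
  moreover have "r^2 < r0^2" using \<open>r < r0\<close> assms by (simp add: power_strict_mono)
  ultimately have "0 < (1-a^2)*(r0^2 - r^2)" by simp
  moreover have "0 \<le> 4*a*(r0 - r)" using \<open>r < r0\<close> assms by simp
  ultimately show ?thesis using \<open>(1-a^2)*(1-r^2) - 4*a*r = _\<close> by linarith
qed

lemma ell_prod_re:
  fixes u v :: complex and a r :: real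
  assumes "cmod u \<le> a" "cmod v \<le> r" "0 \<le> a" "a < 1" "0 \<le> r" "r < (1 - a) / (1 + a)"
  shows "Re (ell u * ell v) > 0"
proof -
  have ra: "r < 1"
  proof (rule ccontr)
    assume "\<not> r < 1"
    hence "1 * (1+a) \<le> r * (1+a)" using assms by (intro mult_right_mono) auto
    moreover have "r * (1+a) < 1 - a" using assms by (simp add: divide_simps)
    ultimately have "1 * (1+a) < 1 - a" by (rule le_less_trans)
    thus False using assms by simp
  qed
  have u1: "u \<noteq> 1" using assms by auto
  have v1: "v \<noteq> 1" using assms ra by auto
  define D where "D = (1 - u) * (1 - v)"
  have D0: "D \<noteq> 0" using u1 v1 D_def by simp
  define p where "p = (1+u) * cnj (1-u)"
  define q where "q = (1+v) * cnj (1-v)"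
  have cD: "cnj D \<noteq> 0" using D0 by simp
  have "ell u * ell v = ((1+u)*(1+v)) / D" by (simp add: ell_def D_def)
  also have "\<dots> = ((1+u)*(1+v)*cnj D)/(D*cnj D)" using cD by simp
  also have "(1+u)*(1+v)*cnj D = p*q" unfolding p_def q_def D_def by (simp add: algebra_simps)
  finally have "ell u * ell v = (p * q) / (D * cnj D)" .
  also have "D * cnj D = complex_of_real ((cmod D)^2)"
    by (simp only: complex_mult_cnj cmod_power2)
  finally have eq: "Re (ell u * ell v) = Re (p*q) / (cmod D)^2"
    by (simp add: Re_divide_of_real)
  have Rp: "Re p = 1 - (cmod u)^2" "Im p = 2 * Im u"
    unfolding p_def cmod_power2 by (simp_all add: algebra_simps power2_eq_square)
  have Rq: "Re q = 1 - (cmod v)^2" "Im q = 2 * Im v"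
    unfolding q_def cmod_power2 by (simp_all add: algebra_simps power2_eq_square)
  have m1: "(1-a^2)*(1-r^2) \<le> (1 - (cmod u)^2) * (1 - (cmod v)^2)"
  proof (rule mult_mono)
    show "1 - a\<^sup>2 \<le> 1 - (cmod u)\<^sup>2" using assms by (simp add: power_mono)
    show "1 - r\<^sup>2 \<le> 1 - (cmod v)\<^sup>2" using assms by (simp add: power_mono)
    show "0 \<le> 1 - (cmod u)\<^sup>2" using assms ra
      by (smt (verit) norm_ge_zero power_le_one)
    show "0 \<le> 1 - r\<^sup>2" using assms ra by (smt (verit) power_le_one)
  qed
  have m2: "Im u * Im v \<le> a * r"
  proof -
    have "Im u * Im v \<le> \<bar>Im u\<bar> * \<bar>Im v\<bar>" by (simp add: abs_mult[symmetric])
    also have "\<dots> \<le> cmod u * cmod v" by (simp add: abs_Im_le_cmod mult_mono)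
    also have "\<dots> \<le> a * r" using assms by (simp add: mult_mono)
    finally show ?thesis .
  qed
  have "Re (p*q) > 0"
    using key_ineq[OF assms(3,4,5,6)] m1 m2 Rp Rq by simp
  then show ?thesis using eq D0 by simp
qed

lemma sup_norm_le:
  assumes "schwarz_type g" "z \<in> unit_disk"
  shows "cmod (g z) \<le> sup_norm g"
proof -
  have "bdd_above ((\<lambda>z. cmod (g z)) ` unit_disk)"
    using assms(1) unfolding schwarz_type_def bdd_above_def unit_disk_def
    by (intro exI[of _ 1]) (auto simp: dist_norm less_imp_le)
  then show ?thesis unfolding sup_norm_def using assms(2) by (rule cSUP_upper2) simp
qed

lemma sup_norm_nonneg:
  assumes "schwarz_type g"
  shows "0 \<le> sup_norm g"
proof -
  have "0 \<in> unit_disk" by (simp add: unit_disk_def)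
  from sup_norm_le[OF assms this] assms show ?thesis by (simp add: schwarz_type_def)
qed

lemma carath_repr:
  assumes "f \<in> carath_P"
  shows "\<exists>\<psi>. (\<forall>z\<in>unit_disk. f z = ell (\<psi> z) \<and> cmod (\<psi> z) \<le> cmod z)"
proof -
  define \<psi> where "\<psi> = (\<lambda>z. (f z - 1) / (f z + 1))"
  have hol: "f holomorphic_on ball 0 1" and pos: "\<And>z. z \<in> ball 0 1 \<Longrightarrow> Re (f z) > 0" and f0: "f 0 = 1"
    using assms by (auto simp: carath_P_def unit_disk_def)
  have nz: "f z + 1 \<noteq> 0" if "z \<in> ball 0 1" for z
  proof
    assume "f z + 1 = 0"
    hence "Re (f z) = -1" by (metis add.right_neutral add_diff_cancel_left' minus_complex.simps(1) one_complex.sel zero_complex.sel diff_0 uminus_complex.sel(1) eq_neg_iff_add_eq_0)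
    with pos[OF that] show False by simp
  qed
  have lt: "cmod (\<psi> z) < 1" if "z \<in> ball 0 1" for z
  proof -
    have "(cmod (f z - 1))^2 < (cmod (f z + 1))^2"
      using pos[OF that] unfolding cmod_power2 by (simp add: power2_eq_square algebra_simps)
    hence "cmod (f z - 1) < cmod (f z + 1)" by (rule power_less_imp_less_base) simp
    thus ?thesis using nz[OF that] unfolding \<psi>_def by (simp add: norm_divide divide_simps)
  qed
  have holpsi: "\<psi> holomorphic_on ball 0 1"
    unfolding \<psi>_def using hol nz by (intro holomorphic_intros) auto
  have psi0: "\<psi> 0 = 0" by (simp add: \<psi>_def f0)
  have "\<forall>z\<in>unit_disk. f z = ell (\<psi> z) \<and> cmod (\<psi> z) \<le> cmod z"
  proof
    fix z assume z: "z \<in> unit_disk"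
    hence zb: "z \<in> ball 0 1" by (simp add: unit_disk_def)
    have "cmod (\<psi> z) \<le> cmod z"
      using Schwarz_Lemma(1)[OF holpsi psi0, of z] lt zb by auto
    moreover have "f z = ell (\<psi> z)"
      using nz[OF zb] unfolding ell_def \<psi>_def by (simp add: divide_simps)
    ultimately show "f z = ell (\<psi> z) \<and> cmod (\<psi> z) \<le> cmod z" by simp
  qed
  thus ?thesis by blast
qed

theorem corollary3p6:
  fixes \<omega> \<phi> :: "complex \<Rightarrow> complex"
  assumes "schwarz_type \<omega>" and "sup_norm \<omega> < 1"
    and "schwarz_type \<phi>"
    and "sup_norm \<phi> < (1 - sup_norm \<omega>) / (1 + sup_norm \<omega>)"
    and "f \<in> carath_P"
  shows "weighted_comp (ell \<circ> \<omega>) \<phi> f \<in> carath_P"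
proof -
  obtain \<psi> where psi: "\<And>z. z\<in>unit_disk \<Longrightarrow> f z = ell (\<psi> z) \<and> cmod (\<psi> z) \<le> cmod z"
    using carath_repr[OF assms(5)] by blast
  have a0: "0 \<le> sup_norm \<omega>" and r0: "0 \<le> sup_norm \<phi>"
    using sup_norm_nonneg assms(1,3) by auto
  have phimap: "\<phi> z \<in> unit_disk" if "z \<in> unit_disk" for z
    using assms(3) that by (auto simp: schwarz_type_def)
  have omap: "\<omega> z \<in> unit_disk" if "z \<in> unit_disk" for z
    using assms(1) that by (auto simp: schwarz_type_def)
  have holw: "\<omega> holomorphic_on unit_disk" and holphi: "\<phi> holomorphic_on unit_disk"
    and holf: "f holomorphic_on unit_disk" and f0: "f 0 = 1"
    using assms by (auto simp: schwarz_type_def carath_P_def)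
  have w1: "\<omega> z \<noteq> 1" if "z \<in> unit_disk" for z
    using omap[OF that] by (auto simp: unit_disk_def)
  have hol1: "(\<lambda>z. ell (\<omega> z)) holomorphic_on unit_disk"
    unfolding ell_def using holw w1 by (intro holomorphic_intros) auto
  have hol2: "(f \<circ> \<phi>) holomorphic_on unit_disk"
    using holomorphic_on_compose_gen[OF holphi holf] phimap by auto
  have hol: "weighted_comp (ell \<circ> \<omega>) \<phi> f holomorphic_on unit_disk"
    unfolding weighted_comp_def using holomorphic_on_mult[OF hol1 hol2] by (simp add: o_def)
  have re: "Re (weighted_comp (ell \<circ> \<omega>) \<phi> f z) > 0" if z: "z \<in> unit_disk" for z
  proof -
    have "f (\<phi> z) = ell (\<psi> (\<phi> z))" and c1: "cmod (\<psi> (\<phi> z)) \<le> cmod (\<phi> z)"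
      using psi[OF phimap[OF z]] by auto
    moreover have "cmod (\<phi> z) \<le> sup_norm \<phi>" using sup_norm_le[OF assms(3) z] .
    moreover have "cmod (\<omega> z) \<le> sup_norm \<omega>" using sup_norm_le[OF assms(1) z] .
    ultimately show ?thesis unfolding weighted_comp_def o_def
      using ell_prod_re[of "\<omega> z" "sup_norm \<omega>" "\<psi> (\<phi> z)" "sup_norm \<phi>"] a0 r0 assms(2,4) by simp
  qed
  have "weighted_comp (ell \<circ> \<omega>) \<phi> f 0 = 1"
    using assms(1,3) f0 by (simp add: weighted_comp_def schwarz_type_def ell_def)
  thus ?thesis using hol re unfolding carath_P_def by blast
qed
end
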